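(* Let $S\subseteq[2n]$ with $1\le|S|\le 2n-1$. Let $\mathcal P_S=\{B_{i,j}:i\ne j,\ \{i,j\}\subseteq S\text{ or }\{i,j\}\subseteq[2n]\setminus S\}$ and let $\mathcal O_S=\{\gamma_j:j\in[2n]\setminus S\}$ if $|S|$ is even and $\mathcal O_S=\{\gamma_j:j\in S\}$ if $|S|$ is odd. Then every element of $\mathcal P_S\cup\mathcal O_S$ commutes with $\gamma_S$, and the commutant of $\mathcal P_S\cup\mathcal O_S$ (hence also the commutant of the group of all unitaries generated by braid operators $B_{i,j}$ and single Majoranas $\gamma_j$ that fix $\gamma_S$ under conjugation) equals $\operatorname{Span}(I,\gamma_S)$. Thus the assemblage of degree-$|S|$ Majorana observables is rigidly symmetric under braid and single-Majorana transformations.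
   Context: Let $\gamma_1,\dots,\gamma_{2n}$ be Majorana operators on $(\mathbb C^2)^{\otimes n}$ (Hermitian, $\gamma_j\gamma_{j'}+\gamma_{j'}\gamma_j=2\delta_{jj'}I$); $\gamma_S=i^{\binom m2}\gamma_{j_1}\cdots\gamma_{j_m}$ for $S=\{j_1<\dots<j_m\}$. For $i\ne j$, $B_{i,j}=\frac1{\sqrt2}(I-\gamma_i\gamma_j)$. The commutant of a set of operators is the set of all operators on $(\mathbb C^2)^{\otimes n}$ commuting with each of them. *)

theory Defs
  imports "Jordan_Normal_Form.Schur_Decomposition"
begin

definition majorana_family :: "nat \<Rightarrow> (nat \<Rightarrow> complex mat) \<Rightarrow> bool" where
  "majorana_family n \<gamma> \<longleftrightarrow>
     (\<forall>j\<in>{1..2*n}. \<gamma> j \<in> carrier_mat (2^n) (2^n) \<and> mat_adjoint (\<gamma> j) = \<gamma> j) \<and>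
     (\<forall>j\<in>{1..2*n}. \<forall>j'\<in>{1..2*n}.
        \<gamma> j * \<gamma> j' + \<gamma> j' * \<gamma> j = (if j = j' then 2 \<cdot>\<^sub>m 1\<^sub>m (2^n) else 0\<^sub>m (2^n) (2^n)))"

definition gammaS :: "nat \<Rightarrow> (nat \<Rightarrow> complex mat) \<Rightarrow> nat set \<Rightarrow> complex mat" where
  "gammaS n \<gamma> S = (\<i> ^ (card S choose 2)) \<cdot>\<^sub>m
     foldr (\<lambda>j M. \<gamma> j * M) (sorted_list_of_set S) (1\<^sub>m (2^n))"

definition braid :: "nat \<Rightarrow> (nat \<Rightarrow> complex mat) \<Rightarrow> nat \<Rightarrow> nat \<Rightarrow> complex mat" where
  "braid n \<gamma> i j = complex_of_real (1 / sqrt 2) \<cdot>\<^sub>m (1\<^sub>m (2^n) - \<gamma> i * \<gamma> j)"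

definition commutant :: "nat \<Rightarrow> complex mat set \<Rightarrow> complex mat set" where
  "commutant n X = {A \<in> carrier_mat (2^n) (2^n). \<forall>M\<in>X. A * M = M * A}"

definition P_set :: "nat \<Rightarrow> (nat \<Rightarrow> complex mat) \<Rightarrow> nat set \<Rightarrow> complex mat set" where
  "P_set n \<gamma> S = {braid n \<gamma> i j | i j. i \<noteq> j \<and>
      ({i, j} \<subseteq> S \<or> {i, j} \<subseteq> {1..2*n} - S)}"

definition O_set :: "nat \<Rightarrow> (nat \<Rightarrow> complex mat) \<Rightarrow> nat set \<Rightarrow> complex mat set" where
  "O_set n \<gamma> S = (if even (card S) then \<gamma> ` ({1..2*n} - S) else \<gamma> ` S)"

text \<open>The group generated by all braid operators B_{i,j} (i \<noteq> j in [2n]) and all single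
  Majoranas gamma_j (j in [2n]); the generators are unitary, so the group is generated by
  left multiplication with generators and their adjoints (= inverses).\<close>
definition generators :: "nat \<Rightarrow> (nat \<Rightarrow> complex mat) \<Rightarrow> complex mat set" where
  "generators n \<gamma> = {braid n \<gamma> i j | i j. i \<in> {1..2*n} \<and> j \<in> {1..2*n} \<and> i \<noteq> j}
                    \<union> \<gamma> ` {1..2*n}"

inductive_set gen_group :: "nat \<Rightarrow> (nat \<Rightarrow> complex mat) \<Rightarrow> complex mat set"
  for n \<gamma> where
  gen_one: "1\<^sub>m (2^n) \<in> gen_group n \<gamma>"
| gen_mult: "g \<in> generators n \<gamma> \<Longrightarrow> U \<in> gen_group n \<gamma> \<Longrightarrow> g * U \<in> gen_group n \<gamma>"
| gen_mult_inv: "g \<in> generators n \<gamma> \<Longrightarrow> U \<in> gen_group n \<gamma> \<Longrightarrow> mat_adjoint g * U \<in> gen_group n \<gamma>"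

definition stabilizer :: "nat \<Rightarrow> (nat \<Rightarrow> complex mat) \<Rightarrow> nat set \<Rightarrow> complex mat set" where
  "stabilizer n \<gamma> S = {U \<in> gen_group n \<gamma>. U * gammaS n \<gamma> S * mat_adjoint U = gammaS n \<gamma> S}"

definition span2 :: "nat \<Rightarrow> complex mat \<Rightarrow> complex mat set" where
  "span2 n G = {a \<cdot>\<^sub>m 1\<^sub>m (2^n) + b \<cdot>\<^sub>m G | a b. True}"

end

theory Submission
  imports Defs
begin

lemma mult_entry:
  assumes "A \<in> carrier_mat d d" "B \<in> carrier_mat d d" "i < d" "j < d"
  shows "(A * B) $$ (i,j) = (\<Sum>k<d. A $$ (i,k) * B $$ (k,j))"
  using assms by (simp add: scalar_prod_def lessThan_atLeast0)

lemma rc_entry: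
  assumes "A \<in> carrier_mat d d" "B \<in> carrier_mat d d" "i < d" "j < d"
  shows "row A i \<bullet> col B j = (\<Sum>k<d. A $$ (i,k) * B $$ (k,j))"
  using assms by (simp add: scalar_prod_def lessThan_atLeast0)

lemma one_smult_mat'[simp]: "(1::'a::semiring_1) \<cdot>\<^sub>m A = A"
  by (rule eq_matI) auto

lemma smult_smult_mat': "k \<cdot>\<^sub>m (l \<cdot>\<^sub>m A) = (k * l :: 'a::semigroup_mult) \<cdot>\<^sub>m A"
  by (rule eq_matI) (auto simp: mult.assoc)

definition tr :: "complex mat \<Rightarrow> complex" where
  "tr A = (\<Sum>i<dim_row A. A $$ (i,i))"

lemma tr_comm: assumes "A \<in> carrier_mat d d" "B \<in> carrier_mat d d"
  shows "tr (A * B) = tr (B * A)"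
proof -
  have "tr (A * B) = (\<Sum>i<d. \<Sum>k<d. A $$ (i,k) * B $$ (k,i))"
    unfolding tr_def using assms by (auto intro!: sum.cong simp: rc_entry)
  also have "\<dots> = (\<Sum>k<d. \<Sum>i<d. B $$ (k,i) * A $$ (i,k))"
    by (subst sum.swap) (simp add: mult.commute)
  also have "\<dots> = tr (B * A)"
    unfolding tr_def using assms by (auto intro!: sum.cong simp: rc_entry)
  finally show ?thesis .
qed

lemma tr_smult: "A \<in> carrier_mat d d \<Longrightarrow> tr (c \<cdot>\<^sub>m A) = c * tr A"
  unfolding tr_def by (auto simp: sum_distrib_left intro!: sum.cong)

lemma tr_one: "tr (1\<^sub>m d) = of_nat d"
  unfolding tr_def by simp

lemma tr_anti:
  assumes h: "h \<in> carrier_mat d d" and h': "h' \<in> carrier_mat d d" and X: "X \<in> carrier_mat d d"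
    and inv: "h' * h = 1\<^sub>m d" and anti: "h * X = (-1) \<cdot>\<^sub>m (X * h)"
  shows "tr X = 0"
proof -
  have inv2: "h * h' = 1\<^sub>m d" using mat_mult_left_right_inverse[OF h' h inv] .
  have "tr X = tr (h' * (h * X))"
    using assoc_mult_mat[OF h' h X] inv X by simp
  also have "\<dots> = tr ((h * X) * h')" using tr_comm[OF h' mult_carrier_mat[OF h X]] .
  also have "\<dots> = tr ((-1) \<cdot>\<^sub>m ((X * h) * h'))"
    using anti mult_smult_assoc_mat[OF mult_carrier_mat[OF X h] h'] by simp
  also have "\<dots> = - tr X"
    using assoc_mult_mat[OF X h h'] inv2 X tr_smult[of X d "-1"] by simp
  finally show ?thesis by simp
qed

lemma len_filter_sorted: "finite T \<Longrightarrow>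
  length (filter (\<lambda>x. x \<noteq> j) (sorted_list_of_set T)) = card (T - {j})"
  by (subst distinct_length_filter) (auto intro: arg_cong[where f=card])

lemma len_filter_sorted_rev: "finite T \<Longrightarrow>
  length (filter (\<lambda>x. x \<noteq> j) (rev (sorted_list_of_set T))) = card (T - {j})"
  using len_filter_sorted[of T j] by (simp add: rev_filter[symmetric])

lemma card_minus_parity: "finite T \<Longrightarrow> card (T - {j}) = (if j \<in> T then card T - 1 else card T)"
  by auto

lemma exists_odd_j:
  fixes T T' :: "nat set"
  assumes "T \<subseteq> {1..2*n}" "T' \<subseteq> {1..2*n}" "T \<noteq> T'"
  shows "\<exists>j\<in>{1..2*n}. odd (card (T - {j}) + card (T' - {j}))"
proof -
  have f: "finite T" "finite T'" using assms finite_subset by blast+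
  show ?thesis
  proof (cases "even (card T + card T')")
    case True
    from assms(3) obtain j where j: "(j \<in> T \<and> j \<notin> T') \<or> (j \<in> T' \<and> j \<notin> T)" by blast
    then have j2: "j \<in> {1..2*n}" using assms by blast
    have "odd (card (T - {j}) + card (T' - {j}))"
    proof (cases "j \<in> T")
      case True
      then have "card T \<ge> 1" using f card_0_eq[of T] by (cases "card T") auto
      moreover have "card (T - {j}) = card T - 1" "card (T' - {j}) = card T'" using True j f by auto
      ultimately show ?thesis using \<open>even (card T + card T')\<close> by presburger
    next
      case False
      then have "card T' \<ge> 1" using f j card_0_eq[of T'] by (cases "card T'") auto
      moreover have "card (T - {j}) = card T" "card (T' - {j}) = card T' - 1" using False j f by auto
      ultimately show ?thesis using \<open>even (card T + card T')\<close> by presburger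
    qed
    with j2 show ?thesis by blast
  next
    case False
    show ?thesis
    proof (rule ccontr)
      assume no: "\<not> ?thesis"
      have disj: "T \<inter> T' = {}"
      proof (rule ccontr)
        assume "T \<inter> T' \<noteq> {}"
        then obtain j where j: "j \<in> T" "j \<in> T'" by blast
        then have c: "card T \<ge> 1" "card T' \<ge> 1" using f card_0_eq by (metis empty_iff less_one not_le)+
        have "card (T - {j}) = card T - 1" "card (T' - {j}) = card T' - 1" using j f by auto
        then have "odd (card (T - {j}) + card (T' - {j}))"
          using c False by presburger
        moreover have "j \<in> {1..2*n}" using j assms by blast
        ultimately show False using no by blast
      qed
      have un: "T \<union> T' = {1..2*n}"
      proof (rule ccontr)
        assume "T \<union> T' \<noteq> {1..2*n}"
        then obtain j where j: "j \<in> {1..2*n}" "j \<notin> T" "j \<notin> T'" using assms by blast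
        have "odd (card (T - {j}) + card (T' - {j}))"
          using j f False by simp
        then show False using no j by blast
      qed
      have "card T + card T' = 2 * n"
        using card_Un_disjoint[OF f disj] un by simp
      then show False using False by simp
    qed
  qed
qed

lemma bit_high: "(t::nat) < 2^m \<Longrightarrow> m \<le> j \<Longrightarrow> \<not> bit t j"
  by (metis bit_take_bit_iff less_le_not_le take_bit_nat_eq_self_iff)

definition Tset :: "nat \<Rightarrow> nat \<Rightarrow> nat set" where
  "Tset m t = Suc ` {j. j < m \<and> bit t j}"

lemma Tset_sub: "Tset (2*n) t \<subseteq> {1..2*n}"
  unfolding Tset_def by auto

lemma Tset_inj: assumes "(t::nat) < 2^m" "t' < 2^m" "Tset m t = Tset m t'" shows "t = t'"
proof -
  have "bit t j = bit t' j" for j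
  proof (cases "j < m")
    case True
    have "Suc j \<in> Tset m t \<longleftrightarrow> bit t j" "Suc j \<in> Tset m t' \<longleftrightarrow> bit t' j"
      unfolding Tset_def using True by auto
    then show ?thesis using assms(3) by simp
  next
    case False then show ?thesis using bit_high[OF assms(1)] bit_high[OF assms(2)] by simp
  qed
  then show ?thesis by (simp add: bit_eq_iff)
qed

lemma sum_divmod: "(\<Sum>k<m*d. f (k div d) (k mod d)) = (\<Sum>a<m. \<Sum>b<d. f a (b::nat))"
proof (induction m)
  case 0 then show ?case by simp
next
  case (Suc m)
  have "(\<Sum>k<Suc m*d. f (k div d) (k mod d)) = (\<Sum>k<m*d. f (k div d) (k mod d)) + (\<Sum>k=m*d..<Suc m*d. f (k div d) (k mod d))"
    by (simp add: lessThan_atLeast0 sum.atLeastLessThan_concat)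
  also have "(\<Sum>k=m*d..<Suc m*d. f (k div d) (k mod d)) = (\<Sum>b=0..<d. f ((b + m*d) div d) ((b + m*d) mod d))"
    using sum.shift_bounds_nat_ivl[of "\<lambda>k. f (k div d) (k mod d)" 0 "m*d" d] by (simp add: add.commute)
  also have "\<dots> = (\<Sum>b<d. f m b)"
    by (auto simp: lessThan_atLeast0 intro!: sum.cong)
  finally show ?case using Suc by simp
qed

lemma adj_car: "A \<in> carrier_mat d d \<Longrightarrow> mat_adjoint (A :: complex mat) \<in> carrier_mat d d"
  unfolding mat_adjoint_def by (simp add: mat_of_rows_def)

lemma adj_entry: "A \<in> carrier_mat d d \<Longrightarrow> i < d \<Longrightarrow> j < d \<Longrightarrow>
   mat_adjoint (A :: complex mat) $$ (i,j) = cnj (A $$ (j,i))"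
  unfolding mat_adjoint_def by (simp add: mat_of_rows_def)

lemma adj_adj: "A \<in> carrier_mat d d \<Longrightarrow> mat_adjoint (mat_adjoint (A :: complex mat)) = A"
proof -
  assume A: "A \<in> carrier_mat d d"
  have A': "mat_adjoint A \<in> carrier_mat d d" using adj_car[OF A] .
  have A'': "mat_adjoint (mat_adjoint A) \<in> carrier_mat d d" using adj_car[OF A'] .
  show ?thesis by (rule eq_matI) (use A A' A'' in \<open>auto simp: adj_entry\<close>)
qed

lemma adj_mult: assumes "A \<in> carrier_mat d d" "B \<in> carrier_mat d d"
  shows "mat_adjoint (A * B :: complex mat) = mat_adjoint B * mat_adjoint A"
proof (rule eq_matI)
  fix i j assume ij: "i < dim_row (mat_adjoint B * mat_adjoint A)" "j < dim_col (mat_adjoint B * mat_adjoint A)"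
  then have ij2: "i < d" "j < d" using adj_car assms by auto
  show "mat_adjoint (A * B) $$ (i,j) = (mat_adjoint B * mat_adjoint A) $$ (i,j)"
    unfolding adj_entry[OF mult_carrier_mat[OF assms] ij2]
    using ij2 assms adj_car[OF assms(1)] adj_car[OF assms(2)]
    by (simp add: adj_entry mult_entry rc_entry mult.commute)
qed (use assms adj_car[OF assms(1)] adj_car[OF assms(2)] adj_car[OF mult_carrier_mat[OF assms]] in auto)

locale maj =
  fixes n :: nat and \<gamma> :: "nat \<Rightarrow> complex mat"
  assumes mf: "majorana_family n \<gamma>"
begin

abbreviation "d \<equiv> (2::nat)^n"

lemma gcar: "j \<in> {1..2*n} \<Longrightarrow> \<gamma> j \<in> carrier_mat d d"
  using mf unfolding majorana_family_def by blast

lemma gherm: "j \<in> {1..2*n} \<Longrightarrow> mat_adjoint (\<gamma> j) = \<gamma> j"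
  using mf unfolding majorana_family_def by blast

lemma add_self_eq: fixes A C :: "complex mat"
  assumes "A \<in> carrier_mat d d" "C \<in> carrier_mat d d" "A + A = 2 \<cdot>\<^sub>m C" shows "A = C"
proof (rule eq_matI)
  fix a b assume ab: "a < dim_row C" "b < dim_col C"
  have 1: "(A + A) $$ (a,b) = A $$ (a,b) + A $$ (a,b)" using assms(1,2) ab by simp
  have 2: "(2 \<cdot>\<^sub>m C) $$ (a,b) = 2 * C $$ (a,b)" using assms(1,2) ab by simp
  from 1 2 assms(3) show "A $$ (a,b) = C $$ (a,b)" by simp
qed (use assms in auto)

lemma add_zero_eq: fixes A B :: "complex mat"
  assumes "A \<in> carrier_mat d d" "B \<in> carrier_mat d d" "A + B = 0\<^sub>m d d" shows "A = (-1) \<cdot>\<^sub>m B"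
proof (rule eq_matI)
  fix a b assume ab: "a < dim_row ((-1) \<cdot>\<^sub>m B)" "b < dim_col ((-1) \<cdot>\<^sub>m B)"
  have 1: "(A + B) $$ (a,b) = A $$ (a,b) + B $$ (a,b)" using assms(1,2) ab by simp
  have 2: "(0\<^sub>m d d) $$ (a,b) = (0::complex)" using assms(1,2) ab by simp
  have 3: "((-1) \<cdot>\<^sub>m B) $$ (a,b) = - B $$ (a,b)" using assms(1,2) ab by simp
  from 1 2 3 assms(3) show "A $$ (a,b) = ((-1) \<cdot>\<^sub>m B) $$ (a,b)" by (simp add: add_eq_0_iff)
qed (use assms in auto)

lemma gsq: assumes "j \<in> {1..2*n}" shows "\<gamma> j * \<gamma> j = 1\<^sub>m d"
proof -
  have e: "\<gamma> j * \<gamma> j + \<gamma> j * \<gamma> j = 2 \<cdot>\<^sub>m 1\<^sub>m d"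
    using mf assms unfolding majorana_family_def by auto
  have c: "\<gamma> j * \<gamma> j \<in> carrier_mat d d" using gcar[OF assms] by simp
  show ?thesis by (rule add_self_eq[OF c _ e]) simp
qed

lemma ganti: assumes "j \<in> {1..2*n}" "k \<in> {1..2*n}" "j \<noteq> k"
  shows "\<gamma> j * \<gamma> k = (-1) \<cdot>\<^sub>m (\<gamma> k * \<gamma> j)"
proof -
  have e: "\<gamma> j * \<gamma> k + \<gamma> k * \<gamma> j = 0\<^sub>m d d"
    using mf assms unfolding majorana_family_def by auto
  have c: "\<gamma> j * \<gamma> k \<in> carrier_mat d d" "\<gamma> k * \<gamma> j \<in> carrier_mat d d"
    using gcar[OF assms(1)] gcar[OF assms(2)] by auto
  show ?thesis by (rule add_zero_eq[OF c e])
qed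

definition prodL :: "nat list \<Rightarrow> complex mat" where
  "prodL L = foldr (\<lambda>j M. \<gamma> j * M) L (1\<^sub>m d)"

lemma prodL_simps[simp]: "prodL [] = 1\<^sub>m d" "prodL (x # L) = \<gamma> x * prodL L"
  by (simp_all add: prodL_def)

lemma prodL_car: "set L \<subseteq> {1..2*n} \<Longrightarrow> prodL L \<in> carrier_mat d d"
proof (induction L)
  case (Cons a L) then show ?case using gcar[of a] mult_carrier_mat by force
qed simp

lemma prodL_append: "set L \<subseteq> {1..2*n} \<Longrightarrow> set K \<subseteq> {1..2*n} \<Longrightarrow>
   prodL (L @ K) = prodL L * prodL K"
proof (induction L)
  case Nil then show ?case using prodL_car[of K] by simp
next
  case (Cons x L)
  have gx: "\<gamma> x \<in> carrier_mat d d" using Cons by (auto intro: gcar)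
  show ?case using Cons prodL_car[of L] prodL_car[of K] gx by (simp add: assoc_mult_mat)
qed

lemma prodL_sign:
  assumes "set L \<subseteq> {1..2*n}" "j \<in> {1..2*n}"
  shows "\<gamma> j * prodL L = (-1)^(length (filter (\<lambda>x. x \<noteq> j) L)) \<cdot>\<^sub>m (prodL L * \<gamma> j)"
  using assms(1)
proof (induction L)
  case Nil then show ?case using gcar[OF assms(2)] by simp
next
  case (Cons x L)
  have gx: "\<gamma> x \<in> carrier_mat d d" using Cons by (auto intro: gcar)
  have gj: "\<gamma> j \<in> carrier_mat d d" using assms by (auto intro: gcar)
  have pL: "prodL L \<in> carrier_mat d d" using Cons prodL_car by auto
  have IH: "\<gamma> j * prodL L = (-1)^(length (filter (\<lambda>x. x \<noteq> j) L)) \<cdot>\<^sub>m (prodL L * \<gamma> j)"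
    using Cons by auto
  show ?case
  proof (cases "x = j")
    case True
    have "\<gamma> j * prodL (x # L) = \<gamma> x * (\<gamma> j * prodL L)"
      using True by simp
    also have "\<dots> = (-1)^(length (filter (\<lambda>x. x \<noteq> j) L)) \<cdot>\<^sub>m (\<gamma> x * prodL L * \<gamma> j)"
      using IH mult_smult_distrib[OF gx mult_carrier_mat[OF pL gj]] assoc_mult_mat[OF gx pL gj] by simp
    finally show ?thesis using True by simp
  next
    case False
    have xj: "\<gamma> j * \<gamma> x = (-1) \<cdot>\<^sub>m (\<gamma> x * \<gamma> j)"
      using ganti[of j x] False Cons assms by auto
    have "\<gamma> j * prodL (x # L) = (\<gamma> j * \<gamma> x) * prodL L"
      using gx pL gj by (simp add: assoc_mult_mat)
    also have "\<dots> = (-1) \<cdot>\<^sub>m (\<gamma> x * (\<gamma> j * prodL L))"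
      using xj mult_smult_assoc_mat[OF mult_carrier_mat[OF gx gj] pL] assoc_mult_mat[OF gx gj pL] by simp
    also have "\<dots> = ((-1) * (-1)^(length (filter (\<lambda>x. x \<noteq> j) L))) \<cdot>\<^sub>m (\<gamma> x * prodL L * \<gamma> j)"
      using IH mult_smult_distrib[OF gx mult_carrier_mat[OF pL gj]] assoc_mult_mat[OF gx pL gj]
      by (simp add: smult_smult_mat')
    finally show ?thesis using False by simp
  qed
qed

lemma prodL_rev_inv: "set L \<subseteq> {1..2*n} \<Longrightarrow> prodL (rev L) * prodL L = 1\<^sub>m d"
proof (induction L)
  case Nil then show ?case by simp
next
  case (Cons x L)
  have gx: "\<gamma> x \<in> carrier_mat d d" using Cons by (auto intro: gcar)
  have pL: "prodL L \<in> carrier_mat d d" using Cons prodL_car by auto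
  have pR: "prodL (rev L) \<in> carrier_mat d d" using Cons prodL_car[of "rev L"] by auto
  have "prodL (rev (x # L)) = prodL (rev L) * \<gamma> x"
    using Cons prodL_append[of "rev L" "[x]"] gx by simp
  then have "prodL (rev (x # L)) * prodL (x # L) = prodL (rev L) * \<gamma> x * (\<gamma> x * prodL L)"
    by simp
  also have "\<dots> = prodL (rev L) * ((\<gamma> x * \<gamma> x) * prodL L)"
    using assoc_mult_mat[OF pR gx mult_carrier_mat[OF gx pL]] assoc_mult_mat[OF gx gx pL] by metis
  also have "\<dots> = 1\<^sub>m d" using gsq[of x] Cons pL pR by simp
  finally show ?case .
qed

lemma prodL_rev_inv2: "set L \<subseteq> {1..2*n} \<Longrightarrow> prodL L * prodL (rev L) = 1\<^sub>m d"
  using mat_mult_left_right_inverse[OF prodL_car[of "rev L"] prodL_car[of L] prodL_rev_inv[of L]]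
  by simp

definition Pm :: "nat set \<Rightarrow> complex mat" where "Pm T = prodL (sorted_list_of_set T)"
definition Qm :: "nat set \<Rightarrow> complex mat" where "Qm T = prodL (rev (sorted_list_of_set T))"

lemma set_sorted_sub: "T \<subseteq> {1..2*n} \<Longrightarrow> set (sorted_list_of_set T) \<subseteq> {1..2*n}"
  using finite_subset[of T "{1..2*n}"] by auto

lemma Pm_car: "T \<subseteq> {1..2*n} \<Longrightarrow> Pm T \<in> carrier_mat d d"
  unfolding Pm_def using set_sorted_sub prodL_car by blast

lemma Qm_car: "T \<subseteq> {1..2*n} \<Longrightarrow> Qm T \<in> carrier_mat d d"
  unfolding Qm_def using set_sorted_sub prodL_car[of "rev (sorted_list_of_set T)"] by auto

lemma Pm_sign: assumes "T \<subseteq> {1..2*n}" "j \<in> {1..2*n}"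
  shows "\<gamma> j * Pm T = (-1)^(card (T - {j})) \<cdot>\<^sub>m (Pm T * \<gamma> j)"
  using prodL_sign[OF set_sorted_sub[OF assms(1)] assms(2)] len_filter_sorted[of T j]
    finite_subset[OF assms(1)] unfolding Pm_def by auto

lemma Qm_sign: assumes "T \<subseteq> {1..2*n}" "j \<in> {1..2*n}"
  shows "\<gamma> j * Qm T = (-1)^(card (T - {j})) \<cdot>\<^sub>m (Qm T * \<gamma> j)"
  using prodL_sign[of "rev (sorted_list_of_set T)" j] set_sorted_sub[OF assms(1)] assms(2)
     len_filter_sorted_rev[of T j] finite_subset[OF assms(1)] unfolding Qm_def by auto

lemma tr_PQ: assumes "T \<subseteq> {1..2*n}" "T' \<subseteq> {1..2*n}"
  shows "tr (Pm T * Qm T') = (if T = T' then of_nat d else 0)"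
proof (cases "T = T'")
  case True
  then show ?thesis unfolding Pm_def Qm_def
    using prodL_rev_inv2[OF set_sorted_sub[OF assms(1)]] tr_one by simp
next
  case False
  obtain j where j: "j \<in> {1..2*n}" "odd (card (T - {j}) + card (T' - {j}))"
    using exists_odd_j[OF assms False] by blast
  have P: "Pm T \<in> carrier_mat d d" and Q: "Qm T' \<in> carrier_mat d d" using Pm_car Qm_car assms by auto
  have g: "\<gamma> j \<in> carrier_mat d d" using gcar j by auto
  have "\<gamma> j * (Pm T * Qm T') = (\<gamma> j * Pm T) * Qm T'" using assoc_mult_mat[OF g P Q] by simp
  also have "\<dots> = (-1)^(card (T - {j})) \<cdot>\<^sub>m (Pm T * (\<gamma> j * Qm T'))"
    using Pm_sign[OF assms(1) j(1)] mult_smult_assoc_mat[OF mult_carrier_mat[OF P g] Q]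
      assoc_mult_mat[OF P g Q] by simp
  also have "\<dots> = ((-1)^(card (T - {j})) * (-1)^(card (T' - {j}))) \<cdot>\<^sub>m ((Pm T * Qm T') * \<gamma> j)"
    using Qm_sign[OF assms(2) j(1)] mult_smult_distrib[OF P mult_carrier_mat[OF Q g]]
      assoc_mult_mat[OF P Q g] by (simp add: smult_smult_mat')
  also have "\<dots> = (-1) \<cdot>\<^sub>m ((Pm T * Qm T') * \<gamma> j)"
    using j(2) by (simp add: power_add[symmetric])
  finally have "tr (Pm T * Qm T') = 0"
    using tr_anti[OF g g mult_carrier_mat[OF P Q] gsq[OF j(1)]] by blast
  then show ?thesis using False by simp
qed

abbreviation "TT t \<equiv> Tset (2*n) t"

lemma dd_pow: "d * d = 2^(2*n)"
  by (simp add: power_add[symmetric] mult_2)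

lemma tr_entries: assumes "A \<in> carrier_mat d d" "B \<in> carrier_mat d d"
  shows "tr (A * B) = (\<Sum>k<d*d. A $$ (k div d, k mod d) * B $$ (k mod d, k div d))"
proof -
  have "tr (A * B) = (\<Sum>a<d. \<Sum>b<d. A $$ (a,b) * B $$ (b,a))"
    unfolding tr_def using assms by (auto intro!: sum.cong simp: rc_entry)
  also have "\<dots> = (\<Sum>k<d*d. A $$ (k div d, k mod d) * B $$ (k mod d, k div d))"
    using sum_divmod[of "\<lambda>a b. A $$ (a,b) * B $$ (b,a)" d d] by simp
  finally show ?thesis .
qed

lemma dual_entry:
  assumes k: "k < d*d" and k': "k' < d*d"
  shows "(\<Sum>t<d*d. Qm (TT t) $$ (k mod d, k div d) * Pm (TT t) $$ (k' div d, k' mod d))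
         = (if k = k' then of_nat d else 0)"
proof -
  define M :: "complex mat" where "M = mat (d*d) (d*d) (\<lambda>(t,k). Pm (TT t) $$ (k div d, k mod d))"
  define N :: "complex mat" where "N = mat (d*d) (d*d) (\<lambda>(k,t). Qm (TT t) $$ (k mod d, k div d))"
  have Mc: "M \<in> carrier_mat (d*d) (d*d)" and Nc: "N \<in> carrier_mat (d*d) (d*d)"
    unfolding M_def N_def by auto
  have MN: "M * ((1 / of_nat d) \<cdot>\<^sub>m N) = 1\<^sub>m (d*d)"
  proof (rule eq_matI)
    fix t t' assume tt: "t < dim_row (1\<^sub>m (d*d) :: complex mat)" "t' < dim_col (1\<^sub>m (d*d) :: complex mat)"
    then have tt2: "t < d*d" "t' < d*d" by auto
    have "(M * ((1 / of_nat d) \<cdot>\<^sub>m N)) $$ (t,t') = (1 / of_nat d) * (M * N) $$ (t,t')"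
      using mult_smult_distrib[OF Mc Nc] tt2 Mc Nc by simp
    also have "(M * N) $$ (t,t') = (\<Sum>k<d*d. M $$ (t,k) * N $$ (k,t'))"
      using mult_entry[OF Mc Nc tt2] .
    also have "\<dots> = (\<Sum>k<d*d. Pm (TT t) $$ (k div d, k mod d) * Qm (TT t') $$ (k mod d, k div d))"
      unfolding M_def N_def using tt2 by (auto intro!: sum.cong)
    also have "\<dots> = tr (Pm (TT t) * Qm (TT t'))"
      using tr_entries[OF Pm_car[OF Tset_sub] Qm_car[OF Tset_sub]] by simp
    also have "\<dots> = (if t = t' then of_nat d else 0)"
      using tr_PQ[OF Tset_sub Tset_sub] Tset_inj[of t "2*n" t'] tt2 dd_pow by auto
    finally show "(M * ((1 / of_nat d) \<cdot>\<^sub>m N)) $$ (t,t') = 1\<^sub>m (d*d) $$ (t,t')"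
      using tt2 by simp
  qed (use Mc Nc in auto)
  have NM: "((1 / of_nat d) \<cdot>\<^sub>m N) * M = 1\<^sub>m (d*d)"
    using mat_mult_left_right_inverse[OF Mc _ MN] Nc by simp
  have "((1 / of_nat d) \<cdot>\<^sub>m N * M) $$ (k,k') = (1 / of_nat d) * (N * M) $$ (k,k')"
    using mult_smult_assoc_mat[OF Nc Mc] k k' Mc Nc by simp
  also have "(N * M) $$ (k,k') = (\<Sum>t<d*d. N $$ (k,t) * M $$ (t,k'))"
    using mult_entry[OF Nc Mc k k'] .
  also have "\<dots> = (\<Sum>t<d*d. Qm (TT t) $$ (k mod d, k div d) * Pm (TT t) $$ (k' div d, k' mod d))"
    unfolding M_def N_def using k k' by (auto intro!: sum.cong)
  finally have "(1 / of_nat d) * (\<Sum>t<d*d. Qm (TT t) $$ (k mod d, k div d) * Pm (TT t) $$ (k' div d, k' mod d))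
     = (if k = k' then 1 else 0)"
    using NM k k' by simp
  then show ?thesis by (auto simp: field_simps split: if_splits)
qed

lemma expansion:
  assumes A: "A \<in> carrier_mat d d" and c: "c < d" and e: "e < d"
  shows "(\<Sum>t<d*d. tr (Qm (TT t) * A) * Pm (TT t) $$ (c,e)) = of_nat d * A $$ (c,e)"
proof -
  define k0 where "k0 = c * d + e"
  have k0: "k0 < d*d" "k0 div d = c" "k0 mod d = e"
  proof -
    have "c * d + e < c * d + d" using e by simp
    also have "\<dots> = Suc c * d" by simp
    also have "\<dots> \<le> d * d" using c by (metis Suc_leI mult_le_mono1)
    finally show "k0 < d*d" unfolding k0_def .
    show "k0 div d = c" "k0 mod d = e" unfolding k0_def using e by auto
  qed
  have "(\<Sum>t<d*d. tr (Qm (TT t) * A) * Pm (TT t) $$ (c,e))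
      = (\<Sum>t<d*d. (\<Sum>k<d*d. A $$ (k div d, k mod d) * Qm (TT t) $$ (k mod d, k div d)) * Pm (TT t) $$ (c,e))"
  proof (rule sum.cong[OF refl])
    fix t
    have "tr (Qm (TT t) * A) = tr (A * Qm (TT t))"
      using tr_comm[OF Qm_car[OF Tset_sub] A] .
    also have "\<dots> = (\<Sum>k<d*d. A $$ (k div d, k mod d) * Qm (TT t) $$ (k mod d, k div d))"
      using tr_entries[OF A Qm_car[OF Tset_sub]] .
    finally show "tr (Qm (TT t) * A) * Pm (TT t) $$ (c,e) =
      (\<Sum>k<d*d. A $$ (k div d, k mod d) * Qm (TT t) $$ (k mod d, k div d)) * Pm (TT t) $$ (c,e)" by simp
  qed
  also have "\<dots> = (\<Sum>k<d*d. A $$ (k div d, k mod d) *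
        (\<Sum>t<d*d. Qm (TT t) $$ (k mod d, k div d) * Pm (TT t) $$ (k0 div d, k0 mod d)))"
    by (simp add: sum_distrib_left sum_distrib_right k0 mult.assoc) (rule sum.swap)
  also have "\<dots> = (\<Sum>k<d*d. A $$ (k div d, k mod d) * (if k = k0 then of_nat d else 0))"
    using dual_entry k0(1) by (auto intro!: sum.cong)
  also have "\<dots> = A $$ (k0 div d, k0 mod d) * of_nat d"
    using k0(1) by (simp add: if_distrib cong: if_cong)
  finally show ?thesis using k0 by simp
qed

lemma tr_zero_via:
  assumes h: "h \<in> carrier_mat d d" and h': "h' \<in> carrier_mat d d" and inv: "h' * h = 1\<^sub>m d"
    and A: "A \<in> carrier_mat d d" and T: "T \<subseteq> {1..2*n}"
    and comm: "A * h = h * A" and anti: "h * Qm T = (-1) \<cdot>\<^sub>m (Qm T * h)"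
  shows "tr (Qm T * A) = 0"
proof -
  have Q: "Qm T \<in> carrier_mat d d" using Qm_car[OF T] .
  have "h * (Qm T * A) = (h * Qm T) * A" using assoc_mult_mat[OF h Q A] by simp
  also have "\<dots> = (-1) \<cdot>\<^sub>m (Qm T * (h * A))"
    using anti mult_smult_assoc_mat[OF mult_carrier_mat[OF Q h] A] assoc_mult_mat[OF Q h A] by simp
  also have "\<dots> = (-1) \<cdot>\<^sub>m ((Qm T * A) * h)"
    using comm assoc_mult_mat[OF Q A h] by simp
  finally show ?thesis using tr_anti[OF h h' mult_carrier_mat[OF Q A] inv] by blast
qed

lemma braid_eq: "braid n \<gamma> i j = complex_of_real (1 / sqrt 2) \<cdot>\<^sub>m (1\<^sub>m d - \<gamma> i * \<gamma> j)"
  unfolding braid_def by simp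

lemma comm_from_braid:
  fixes A G :: "complex mat"
  assumes A: "A \<in> carrier_mat d d" and G: "G \<in> carrier_mat d d" and c: "c \<noteq> 0"
    and comm: "A * (c \<cdot>\<^sub>m (1\<^sub>m d - G)) = (c \<cdot>\<^sub>m (1\<^sub>m d - G)) * A"
  shows "A * G = G * A"
proof -
  have OG: "1\<^sub>m d - G \<in> carrier_mat d d" using G by (rule minus_carrier_mat)
  have 1: "A * (c \<cdot>\<^sub>m (1\<^sub>m d - G)) = c \<cdot>\<^sub>m (A - A * G)"
    using mult_smult_distrib[OF A OG] mult_minus_distrib_mat[OF A one_carrier_mat G] A by simp
  have 2: "(c \<cdot>\<^sub>m (1\<^sub>m d - G)) * A = c \<cdot>\<^sub>m (A - G * A)"
    using mult_smult_assoc_mat[OF OG A] minus_mult_distrib_mat[OF one_carrier_mat G A] A by simp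
  have e: "c \<cdot>\<^sub>m (A - A * G) = c \<cdot>\<^sub>m (A - G * A)" using comm 1 2 by simp
  show ?thesis
  proof (rule eq_matI)
    fix a b assume ab: "a < dim_row (G * A)" "b < dim_col (G * A)"
    then have ab2: "a < d" "b < d" using G A by auto
    have "(c \<cdot>\<^sub>m (A - A * G)) $$ (a,b) = (c \<cdot>\<^sub>m (A - G * A)) $$ (a,b)" using e by simp
    then have "c * (A $$ (a,b) - (A * G) $$ (a,b)) = c * (A $$ (a,b) - (G * A) $$ (a,b))"
      using ab2 A G by simp
    then show "(A * G) $$ (a,b) = (G * A) $$ (a,b)" using c by simp
  qed (use A G in auto)
qed

lemma pair_sign: assumes T: "T \<subseteq> {1..2*n}" and i: "i \<in> {1..2*n}" and j: "j \<in> {1..2*n}"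
  shows "(\<gamma> i * \<gamma> j) * Qm T = (-1)^(card (T - {i}) + card (T - {j})) \<cdot>\<^sub>m (Qm T * (\<gamma> i * \<gamma> j))"
proof -
  have gi: "\<gamma> i \<in> carrier_mat d d" and gj: "\<gamma> j \<in> carrier_mat d d" using gcar i j by auto
  have Q: "Qm T \<in> carrier_mat d d" using Qm_car[OF T] .
  have "(\<gamma> i * \<gamma> j) * Qm T = \<gamma> i * (\<gamma> j * Qm T)" using assoc_mult_mat[OF gi gj Q] .
  also have "\<dots> = (-1)^(card (T - {j})) \<cdot>\<^sub>m ((\<gamma> i * Qm T) * \<gamma> j)"
    using Qm_sign[OF T j] mult_smult_distrib[OF gi mult_carrier_mat[OF Q gj]] assoc_mult_mat[OF gi Q gj] by simp
  also have "\<dots> = ((-1)^(card (T - {j})) * (-1)^(card (T - {i}))) \<cdot>\<^sub>m (Qm T * (\<gamma> i * \<gamma> j))"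
    using Qm_sign[OF T i] mult_smult_assoc_mat[OF mult_carrier_mat[OF Q gi] gj] assoc_mult_mat[OF Q gi gj]
    by (simp add: smult_smult_mat')
  finally show ?thesis by (simp add: power_add mult.commute)
qed

lemma pair_sign_set: assumes T: "T \<subseteq> {1..2*n}" and i: "i \<in> {1..2*n}" and j: "j \<in> {1..2*n}"
  shows "(\<gamma> i * \<gamma> j) * Pm T = (-1)^(card (T - {i}) + card (T - {j})) \<cdot>\<^sub>m (Pm T * (\<gamma> i * \<gamma> j))"
proof -
  have gi: "\<gamma> i \<in> carrier_mat d d" and gj: "\<gamma> j \<in> carrier_mat d d" using gcar i j by auto
  have Q: "Pm T \<in> carrier_mat d d" using Pm_car[OF T] .
  have "(\<gamma> i * \<gamma> j) * Pm T = \<gamma> i * (\<gamma> j * Pm T)" using assoc_mult_mat[OF gi gj Q] .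
  also have "\<dots> = (-1)^(card (T - {j})) \<cdot>\<^sub>m ((\<gamma> i * Pm T) * \<gamma> j)"
    using Pm_sign[OF T j] mult_smult_distrib[OF gi mult_carrier_mat[OF Q gj]] assoc_mult_mat[OF gi Q gj] by simp
  also have "\<dots> = ((-1)^(card (T - {j})) * (-1)^(card (T - {i}))) \<cdot>\<^sub>m (Pm T * (\<gamma> i * \<gamma> j))"
    using Pm_sign[OF T i] mult_smult_assoc_mat[OF mult_carrier_mat[OF Q gi] gj] assoc_mult_mat[OF Q gi gj]
    by (simp add: smult_smult_mat')
  finally show ?thesis by (simp add: power_add mult.commute)
qed

lemma tr_zero_pair:
  assumes A: "A \<in> carrier_mat d d" and T: "T \<subseteq> {1..2*n}" and i: "i \<in> {1..2*n}" and j: "j \<in> {1..2*n}"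
    and ij: "i \<noteq> j" and odd: "odd (card (T - {i}) + card (T - {j}))"
    and comm: "A * braid n \<gamma> i j = braid n \<gamma> i j * A"
  shows "tr (Qm T * A) = 0"
proof -
  have gi: "\<gamma> i \<in> carrier_mat d d" and gj: "\<gamma> j \<in> carrier_mat d d" using gcar i j by auto
  have G: "\<gamma> i * \<gamma> j \<in> carrier_mat d d" using gi gj by simp
  have G': "\<gamma> j * \<gamma> i \<in> carrier_mat d d" using gi gj by simp
  have c: "complex_of_real (1 / sqrt 2) \<noteq> 0" by simp
  have cm: "A * (\<gamma> i * \<gamma> j) = (\<gamma> i * \<gamma> j) * A"
    using comm_from_braid[OF A G c] comm unfolding braid_eq by blast
  have inv: "(\<gamma> j * \<gamma> i) * (\<gamma> i * \<gamma> j) = 1\<^sub>m d"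
  proof -
    have "(\<gamma> j * \<gamma> i) * (\<gamma> i * \<gamma> j) = \<gamma> j * ((\<gamma> i * \<gamma> i) * \<gamma> j)"
      using assoc_mult_mat[OF gj gi G] assoc_mult_mat[OF gi gi gj] by simp
    also have "\<dots> = 1\<^sub>m d" using gsq[OF i] gsq[OF j] gj by simp
    finally show ?thesis .
  qed
  have anti: "(\<gamma> i * \<gamma> j) * Qm T = (-1) \<cdot>\<^sub>m (Qm T * (\<gamma> i * \<gamma> j))"
    using pair_sign[OF T i j] odd by simp
  show ?thesis by (rule tr_zero_via[OF G G' inv A T cm anti])
qed

lemma tr_zero_single:
  assumes A: "A \<in> carrier_mat d d" and T: "T \<subseteq> {1..2*n}" and j: "j \<in> {1..2*n}"
    and odd: "odd (card (T - {j}))" and comm: "A * \<gamma> j = \<gamma> j * A"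
  shows "tr (Qm T * A) = 0"
proof -
  have g: "\<gamma> j \<in> carrier_mat d d" using gcar j by auto
  have anti: "\<gamma> j * Qm T = (-1) \<cdot>\<^sub>m (Qm T * \<gamma> j)"
    using Qm_sign[OF T j] odd by simp
  show ?thesis by (rule tr_zero_via[OF g g gsq[OF j] A T comm anti])
qed

end
lemma par1: "even (s::nat) \<Longrightarrow> 1 \<le> s \<Longrightarrow> s \<le> 2*n - 1 \<Longrightarrow> odd (2*n - s - 1)" by presburger
lemma par2: "1 \<le> (n::nat) \<Longrightarrow> odd (2*n - 1)" by presburger
lemma par3: "odd (s::nat) \<Longrightarrow> s \<le> 2*n - 1 \<Longrightarrow> odd (2*n - s)" by presburger

context maj begin
lemma trace_vanish:
  assumes S: "S \<subseteq> {1..2*n}" and S1: "1 \<le> card S" and S2: "card S \<le> 2*n - 1"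
    and A: "A \<in> carrier_mat d d"
    and comm: "\<forall>M \<in> P_set n \<gamma> S \<union> O_set n \<gamma> S. A * M = M * A"
    and T: "T \<subseteq> {1..2*n}" and T0: "T \<noteq> {}" and TS: "T \<noteq> S"
  shows "tr (Qm T * A) = 0"
proof -
  have fS: "finite S" and fT: "finite T" using S T finite_subset by blast+
  define C where "C = {1..2*n} - S"
  have fC: "finite C" unfolding C_def by simp
  have cardC: "card C = 2*n - card S" unfolding C_def using S by (simp add: card_Diff_subset fS)
  have n1: "n \<ge> 1" using S1 S2 by linarith
  have Cne: "C \<noteq> {}" using cardC S2 n1 by auto
  have braidP: "braid n \<gamma> i j \<in> P_set n \<gamma> S"
    if "i \<noteq> j" "{i,j} \<subseteq> S \<or> {i,j} \<subseteq> C" for i j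
    using that unfolding P_set_def C_def by blast
  have pairodd: "odd (card (T - {i}) + card (T - {j}))" if "i \<in> T" "j \<notin> T" for i j
  proof -
    have "card T \<ge> 1" using that fT by (metis One_nat_def card_0_eq empty_iff less_one not_le)
    moreover have "card (T - {i}) = card T - 1" "card (T - {j}) = card T" using that fT by auto
    ultimately show ?thesis by presburger
  qed
  show ?thesis
  proof (cases "\<exists>i j. i \<in> T \<and> j \<notin> T \<and> i \<noteq> j \<and> ({i,j} \<subseteq> S \<or> {i,j} \<subseteq> C)")
    case True
    then obtain i j where ij: "i \<in> T" "j \<notin> T" "i \<noteq> j" "{i,j} \<subseteq> S \<or> {i,j} \<subseteq> C" by blast
    have ij2: "i \<in> {1..2*n}" "j \<in> {1..2*n}" using ij S unfolding C_def by auto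
    show ?thesis
      by (rule tr_zero_pair[OF A T ij2 ij(3) pairodd[OF ij(1,2)]])
         (use comm braidP[OF ij(3,4)] in blast)
  next
    case False
    have TS': "T \<inter> S = {} \<or> S \<subseteq> T"
    proof (rule ccontr)
      assume "\<not> ?thesis"
      then obtain i j where "i \<in> T \<inter> S" "j \<in> S - T" by blast
      then show False using False by blast
    qed
    have TC': "T \<inter> C = {} \<or> C \<subseteq> T"
    proof (rule ccontr)
      assume "\<not> ?thesis"
      then obtain i j where "i \<in> T \<inter> C" "j \<in> C - T" by blast
      then show False using False by blast
    qed
    have CT: "C \<subseteq> T"
    proof (rule ccontr)
      assume "\<not> C \<subseteq> T"
      then have "T \<inter> C = {}" using TC' by blast
      then have "T \<subseteq> S" using T unfolding C_def by blast
      then show False using TS' T0 TS by blast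
    qed
    have Tcases: "T = C \<or> T = {1..2*n}" using TS' CT T unfolding C_def by blast
    define W where "W = (if even (card S) then C else S)"
    have Wne: "W \<noteq> {}" unfolding W_def using Cne S1 by auto
    then obtain j where jW: "j \<in> W" by blast
    have j: "j \<in> {1..2*n}" using jW S unfolding W_def C_def by (auto split: if_splits)
    have gO: "\<gamma> j \<in> O_set n \<gamma> S" using jW unfolding O_set_def W_def C_def by (auto split: if_splits)
    have card2n: "card {1..2*n} = 2*n" by simp
    have "odd (card (T - {j}))"
    proof (cases "even (card S)")
      case True
      then have jC: "j \<in> C" using jW unfolding W_def by simp
      then have jT: "j \<in> T" using CT by blast
      have "card (T - {j}) = card T - 1" using jT fT by simp
      moreover have "odd (card T - 1)"
      proof (cases "T = C")
        case True
        then have cT: "card T = 2*n - card S" using cardC by simp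
        have "odd (2*n - card S - 1)" using par1[OF \<open>even (card S)\<close> S1 S2] .
        then show ?thesis using cT by simp
      next
        case False
        then have "T = {1..2*n}" using Tcases by blast
        then have cT: "card T = 2*n" by simp
        have "odd (2*n - 1)" using par2[OF n1] .
        then show ?thesis using cT by simp
      qed
      ultimately show ?thesis by simp
    next
      case False
      then have jS: "j \<in> S" using jW unfolding W_def by simp
      show ?thesis
      proof (cases "T = C")
        case True
        then have "card (T - {j}) = card C" using jS unfolding C_def by simp
        moreover have "odd (2*n - card S)" using par3[OF False S2] .
        ultimately show ?thesis using cardC by simp
      next
        case False2: False
        then have "T = {1..2*n}" using Tcases by blast
        then have "card (T - {j}) = card {1..2*n} - 1" using j by (simp only: card_Diff_singleton finite_atLeastAtMost)
        moreover have "odd (2*n - 1)" using par2[OF n1] .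
        ultimately show ?thesis by simp
      qed
    qed
    then show ?thesis
      by (rule tr_zero_single[OF A T j]) (use comm gO in blast)
  qed
qed

lemma in_span:
  assumes A: "A \<in> carrier_mat d d" and S: "S \<subseteq> {1..2*n}" and S0: "S \<noteq> {}"
    and van: "\<And>T. T \<subseteq> {1..2*n} \<Longrightarrow> T \<noteq> {} \<Longrightarrow> T \<noteq> S \<Longrightarrow> tr (Qm T * A) = 0"
  shows "\<exists>a b. A = a \<cdot>\<^sub>m 1\<^sub>m d + b \<cdot>\<^sub>m Pm S"
proof -
  define a where "a = (1 / of_nat d) * (\<Sum>t<d*d. if TT t = {} then tr (Qm (TT t) * A) else 0)"
  define b where "b = (1 / of_nat d) * (\<Sum>t<d*d. if TT t = S then tr (Qm (TT t) * A) else 0)"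
  have PS: "Pm S \<in> carrier_mat d d" using Pm_car[OF S] .
  have "A = a \<cdot>\<^sub>m 1\<^sub>m d + b \<cdot>\<^sub>m Pm S"
  proof (rule eq_matI)
    fix c e assume ce: "c < dim_row (a \<cdot>\<^sub>m 1\<^sub>m d + b \<cdot>\<^sub>m Pm S)" "e < dim_col (a \<cdot>\<^sub>m 1\<^sub>m d + b \<cdot>\<^sub>m Pm S)"
    then have c: "c < d" and e: "e < d" using PS by auto
    have dnz: "(of_nat d :: complex) \<noteq> 0" by simp
    have pt: "tr (Qm (TT t) * A) * Pm (TT t) $$ (c,e) =
       (if TT t = {} then tr (Qm (TT t) * A) else 0) * 1\<^sub>m d $$ (c,e)
       + (if TT t = S then tr (Qm (TT t) * A) else 0) * Pm S $$ (c,e)" for t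
    proof -
      consider "TT t = {}" | "TT t = S" | "TT t \<noteq> {}" "TT t \<noteq> S" by blast
      then show ?thesis
      proof cases
        case 1
        then have "Pm (TT t) = 1\<^sub>m d" unfolding Pm_def by simp
        then show ?thesis using 1 S0 by simp
      next
        case 2 then show ?thesis using S0 by simp
      next
        case 3 then show ?thesis using van[OF Tset_sub] by simp
      qed
    qed
    have "of_nat d * A $$ (c,e) = (\<Sum>t<d*d. tr (Qm (TT t) * A) * Pm (TT t) $$ (c,e))"
      using expansion[OF A c e] by simp
    also have "\<dots> = (\<Sum>t<d*d. if TT t = {} then tr (Qm (TT t) * A) else 0) * 1\<^sub>m d $$ (c,e)
       + (\<Sum>t<d*d. if TT t = S then tr (Qm (TT t) * A) else 0) * Pm S $$ (c,e)"
      unfolding pt by (simp add: sum.distrib sum_distrib_right)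
    finally have "A $$ (c,e) = a * 1\<^sub>m d $$ (c,e) + b * Pm S $$ (c,e)"
      unfolding a_def b_def using dnz by (simp add: field_simps)
    then show "A $$ (c,e) = (a \<cdot>\<^sub>m 1\<^sub>m d + b \<cdot>\<^sub>m Pm S) $$ (c,e)"
      using c e PS by simp
  qed (use A PS in auto)
  then show ?thesis by blast
qed

abbreviation "cc \<equiv> complex_of_real (1 / sqrt 2)"

lemma braid_car: "i \<in> {1..2*n} \<Longrightarrow> j \<in> {1..2*n} \<Longrightarrow> braid n \<gamma> i j \<in> carrier_mat d d"
  unfolding braid_eq by (rule smult_carrier_mat, rule minus_carrier_mat, rule mult_carrier_mat[OF gcar gcar])

lemma braid_adj: assumes i: "i \<in> {1..2*n}" and j: "j \<in> {1..2*n}"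
  shows "mat_adjoint (braid n \<gamma> i j) = cc \<cdot>\<^sub>m (1\<^sub>m d - \<gamma> j * \<gamma> i)"
proof -
  have gi: "\<gamma> i \<in> carrier_mat d d" and gj: "\<gamma> j \<in> carrier_mat d d" using gcar i j by auto
  have G: "\<gamma> i * \<gamma> j \<in> carrier_mat d d" using gi gj by simp
  have H: "\<gamma> j * \<gamma> i \<in> carrier_mat d d" using gi gj by simp
  have B: "braid n \<gamma> i j \<in> carrier_mat d d" using braid_car[OF i j] .
  have adjG: "mat_adjoint (\<gamma> i * \<gamma> j) = \<gamma> j * \<gamma> i"
    using adj_mult[OF gi gj] gherm[OF i] gherm[OF j] by simp
  show ?thesis
  proof (rule eq_matI)
    fix a b assume ab: "a < dim_row (cc \<cdot>\<^sub>m (1\<^sub>m d - \<gamma> j * \<gamma> i))" "b < dim_col (cc \<cdot>\<^sub>m (1\<^sub>m d - \<gamma> j * \<gamma> i))"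
    then have ab2: "a < d" "b < d" using H by auto
    have e1: "cnj ((\<gamma> i * \<gamma> j) $$ (b,a)) = (\<gamma> j * \<gamma> i) $$ (a,b)"
      using adj_entry[OF G ab2] adjG by simp
    have "mat_adjoint (braid n \<gamma> i j) $$ (a,b) = cnj (braid n \<gamma> i j $$ (b,a))"
      using adj_entry[OF B ab2] .
    also have "braid n \<gamma> i j $$ (b,a) = cc * ((if b = a then 1 else 0) - (\<gamma> i * \<gamma> j) $$ (b,a))"
      unfolding braid_eq using ab2 carrier_matD[OF G] by simp
    finally show "mat_adjoint (braid n \<gamma> i j) $$ (a,b) = (cc \<cdot>\<^sub>m (1\<^sub>m d - \<gamma> j * \<gamma> i)) $$ (a,b)"
      using ab2 H e1 carrier_matD[OF H] by simp
  qed (use B H adj_car[OF B] in auto)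
qed

end
context maj begin
lemma braid_unit: assumes i: "i \<in> {1..2*n}" and j: "j \<in> {1..2*n}" and ij: "i \<noteq> j"
  shows "mat_adjoint (braid n \<gamma> i j) * braid n \<gamma> i j = 1\<^sub>m d"
proof -
  have gi: "\<gamma> i \<in> carrier_mat d d" and gj: "\<gamma> j \<in> carrier_mat d d" using gcar i j by auto
  define G where "G = \<gamma> i * \<gamma> j"
  define H where "H = \<gamma> j * \<gamma> i"
  have G: "G \<in> carrier_mat d d" and H: "H \<in> carrier_mat d d" using gi gj G_def H_def by auto
  have HG: "H * G = 1\<^sub>m d"
  proof -
    have "H * G = \<gamma> j * ((\<gamma> i * \<gamma> i) * \<gamma> j)"
      unfolding H_def G_def using assoc_mult_mat[OF gj gi mult_carrier_mat[OF gi gj]] assoc_mult_mat[OF gi gi gj] by simp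
    also have "\<dots> = 1\<^sub>m d" using gsq[OF i] gsq[OF j] gj by simp
    finally show ?thesis .
  qed
  have HmG: "H = (-1) \<cdot>\<^sub>m G" unfolding H_def G_def using ganti[OF j i] ij by simp
  have OH: "1\<^sub>m d - H \<in> carrier_mat d d" and OG: "1\<^sub>m d - G \<in> carrier_mat d d"
    using H G by (auto intro: minus_carrier_mat)
  have "(1\<^sub>m d - H) * (1\<^sub>m d - G) = (1\<^sub>m d - H) * 1\<^sub>m d - (1\<^sub>m d - H) * G"
    using mult_minus_distrib_mat[OF OH one_carrier_mat G] .
  also have "(1\<^sub>m d - H) * G = 1\<^sub>m d * G - H * G"
    using minus_mult_distrib_mat[OF one_carrier_mat H G] .
  finally have X: "(1\<^sub>m d - H) * (1\<^sub>m d - G) = (1\<^sub>m d - H) - (G - 1\<^sub>m d)"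
    using OH G H HG by simp
  have X2: "(1\<^sub>m d - H) * (1\<^sub>m d - G) = 2 \<cdot>\<^sub>m 1\<^sub>m d"
    unfolding X
  proof (rule eq_matI)
    fix a b assume ab: "a < dim_row (2 \<cdot>\<^sub>m 1\<^sub>m d :: complex mat)" "b < dim_col (2 \<cdot>\<^sub>m 1\<^sub>m d :: complex mat)"
    then have ab2: "a < d" "b < d" by auto
    show "(1\<^sub>m d - H - (G - 1\<^sub>m d)) $$ (a,b) = (2 \<cdot>\<^sub>m 1\<^sub>m d) $$ (a,b)"
      using ab2 G H unfolding HmG by simp
  qed (use G H in auto)
  have "mat_adjoint (braid n \<gamma> i j) * braid n \<gamma> i j = (cc * cc) \<cdot>\<^sub>m ((1\<^sub>m d - H) * (1\<^sub>m d - G))"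
    unfolding braid_adj[OF i j] unfolding braid_eq H_def[symmetric] G_def[symmetric]
    using mult_smult_assoc_mat[OF OH smult_carrier_mat[OF OG], of cc cc] mult_smult_distrib[OF OH OG, of cc]
    by (simp only: smult_smult_mat')
  also have "\<dots> = 1\<^sub>m d"
  proof -
    have r: "(1 / sqrt 2) * (1 / sqrt 2) * 2 = (1::real)" by simp
    have "cc * cc * 2 = complex_of_real ((1 / sqrt 2) * (1 / sqrt 2) * 2)"
      by (simp only: of_real_mult of_real_numeral)
    then have "cc * cc * 2 = 1" using r by simp
    then show ?thesis unfolding X2 smult_smult_mat' by simp
  qed
  finally show ?thesis .
qed

lemma gen_unit: assumes "g \<in> generators n \<gamma>"
  shows "g \<in> carrier_mat d d \<and> mat_adjoint g * g = 1\<^sub>m d"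
  using assms unfolding generators_def
proof (elim UnE)
  assume "g \<in> {braid n \<gamma> i j | i j. i \<in> {1..2*n} \<and> j \<in> {1..2*n} \<and> i \<noteq> j}"
  then obtain i j where "g = braid n \<gamma> i j" "i \<in> {1..2*n}" "j \<in> {1..2*n}" "i \<noteq> j" by blast
  then show ?thesis using braid_car braid_unit by blast
next
  assume "g \<in> \<gamma> ` {1..2*n}"
  then obtain j where "g = \<gamma> j" "j \<in> {1..2*n}" by blast
  then show ?thesis using gcar gherm gsq by simp
qed

lemma group_unit: assumes "U \<in> gen_group n \<gamma>"
  shows "U \<in> carrier_mat d d \<and> mat_adjoint U * U = 1\<^sub>m d"
  using assms
proof (induction rule: gen_group.induct)
  case gen_one
  have "mat_adjoint (1\<^sub>m d :: complex mat) = 1\<^sub>m d"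
  proof (rule eq_matI)
    fix i j assume ij: "i < dim_row (1\<^sub>m d :: complex mat)" "j < dim_col (1\<^sub>m d :: complex mat)"
    then show "mat_adjoint (1\<^sub>m d :: complex mat) $$ (i,j) = 1\<^sub>m d $$ (i,j)"
      using adj_entry[OF one_carrier_mat, of i d j] by simp
  qed (use adj_car[OF one_carrier_mat[of d]] in auto)
  then show ?case by simp
next
  case (gen_mult g U)
  have g: "g \<in> carrier_mat d d" and gu: "mat_adjoint g * g = 1\<^sub>m d" using gen_unit[OF gen_mult(1)] by auto
  have U: "U \<in> carrier_mat d d" and uu: "mat_adjoint U * U = 1\<^sub>m d" using gen_mult by auto
  have g': "mat_adjoint g \<in> carrier_mat d d" and U': "mat_adjoint U \<in> carrier_mat d d" using adj_car g U by auto
  have "mat_adjoint (g * U) * (g * U) = mat_adjoint U * ((mat_adjoint g * g) * U)"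
    unfolding adj_mult[OF g U]
    using assoc_mult_mat[OF U' g' mult_carrier_mat[OF g U]] assoc_mult_mat[OF g' g U] by simp
  also have "\<dots> = 1\<^sub>m d" using gu uu U by simp
  finally show ?case using g U by simp
next
  case (gen_mult_inv g U)
  have g: "g \<in> carrier_mat d d" and gu: "mat_adjoint g * g = 1\<^sub>m d" using gen_unit[OF gen_mult_inv(1)] by auto
  have U: "U \<in> carrier_mat d d" and uu: "mat_adjoint U * U = 1\<^sub>m d" using gen_mult_inv by auto
  have g': "mat_adjoint g \<in> carrier_mat d d" and U': "mat_adjoint U \<in> carrier_mat d d" using adj_car g U by auto
  have gu2: "g * mat_adjoint g = 1\<^sub>m d" using mat_mult_left_right_inverse[OF g' g gu] .
  have "mat_adjoint (mat_adjoint g * U) * (mat_adjoint g * U) = mat_adjoint U * ((g * mat_adjoint g) * U)"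
    unfolding adj_mult[OF g' U] adj_adj[OF g]
    using assoc_mult_mat[OF U' g mult_carrier_mat[OF g' U]] assoc_mult_mat[OF g g' U] by simp
  also have "\<dots> = 1\<^sub>m d" using gu2 uu U by simp
  finally show ?case using g' U by simp
qed

lemma gammaS_eq: "gammaS n \<gamma> S = (\<i> ^ (card S choose 2)) \<cdot>\<^sub>m Pm S"
  unfolding gammaS_def Pm_def prodL_def by simp

end
context maj begin
lemma PO_car: assumes S: "S \<subseteq> {1..2*n}" and M: "M \<in> P_set n \<gamma> S \<union> O_set n \<gamma> S"
  shows "M \<in> carrier_mat d d"
proof -
  consider (P) i j where "M = braid n \<gamma> i j" "i \<noteq> j" "{i, j} \<subseteq> S \<or> {i, j} \<subseteq> {1..2*n} - S"
    | (O) j where "M = \<gamma> j" "j \<in> {1..2*n}"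
    using M S unfolding P_set_def O_set_def by (cases "even (card S)") auto
  then show ?thesis
  proof cases
    case (P i j)
    then have "i \<in> {1..2*n}" "j \<in> {1..2*n}" using S by auto
    then show ?thesis using P braid_car by blast
  next
    case (O j) then show ?thesis using gcar by blast
  qed
qed

lemma PO_gen: assumes S: "S \<subseteq> {1..2*n}" and M: "M \<in> P_set n \<gamma> S \<union> O_set n \<gamma> S"
  shows "M \<in> generators n \<gamma>"
proof -
  consider (P) i j where "M = braid n \<gamma> i j" "i \<noteq> j" "{i, j} \<subseteq> S \<or> {i, j} \<subseteq> {1..2*n} - S"
    | (O) j where "M = \<gamma> j" "j \<in> {1..2*n}"
    using M S unfolding P_set_def O_set_def by (cases "even (card S)") auto
  then show ?thesis
  proof cases
    case (P i j)
    then have "i \<in> {1..2*n}" "j \<in> {1..2*n}" using S by auto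
    then have "braid n \<gamma> i j \<in> {braid n \<gamma> i j | i j. i \<in> {1..2*n} \<and> j \<in> {1..2*n} \<and> i \<noteq> j}"
      using P(2) by blast
    then show ?thesis unfolding generators_def P(1) by (rule UnI1)
  next
    case (O j) then show ?thesis unfolding generators_def by (intro UnI2) simp
  qed
qed

lemma part1: assumes S: "S \<subseteq> {1..2*n}" and M: "M \<in> P_set n \<gamma> S \<union> O_set n \<gamma> S"
  shows "M * Pm S = Pm S * M"
proof -
  have fS: "finite S" using S finite_subset by blast
  have PS: "Pm S \<in> carrier_mat d d" using Pm_car[OF S] .
  from M show ?thesis unfolding P_set_def O_set_def
  proof (elim UnE)
    assume "M \<in> {braid n \<gamma> i j | i j. i \<noteq> j \<and> ({i, j} \<subseteq> S \<or> {i, j} \<subseteq> {1..2*n} - S)}"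
    then obtain i j where ij: "M = braid n \<gamma> i j" "i \<noteq> j" "{i, j} \<subseteq> S \<or> {i, j} \<subseteq> {1..2*n} - S" by blast
    have i: "i \<in> {1..2*n}" and j: "j \<in> {1..2*n}" using ij S by auto
    have G: "\<gamma> i * \<gamma> j \<in> carrier_mat d d" using mult_carrier_mat[OF gcar[OF i] gcar[OF j]] .
    have ev: "even (card (S - {i}) + card (S - {j}))"
      using ij(3)
    proof
      assume "{i,j} \<subseteq> S"
      then have "card (S - {i}) = card S - 1" "card (S - {j}) = card S - 1" using fS by auto
      then show ?thesis by simp
    next
      assume "{i,j} \<subseteq> {1..2*n} - S"
      then have "card (S - {i}) = card S" "card (S - {j}) = card S" using fS by auto
      then show ?thesis by simp
    qed
    have GP: "(\<gamma> i * \<gamma> j) * Pm S = Pm S * (\<gamma> i * \<gamma> j)"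
      using pair_sign_set[OF S i j] ev by simp
    have OG: "1\<^sub>m d - \<gamma> i * \<gamma> j \<in> carrier_mat d d" using G by (rule minus_carrier_mat)
    have "braid n \<gamma> i j * Pm S = cc \<cdot>\<^sub>m (Pm S - (\<gamma> i * \<gamma> j) * Pm S)"
      unfolding braid_eq using mult_smult_assoc_mat[OF OG PS] minus_mult_distrib_mat[OF one_carrier_mat G PS] PS
      by simp
    also have "\<dots> = cc \<cdot>\<^sub>m (Pm S - Pm S * (\<gamma> i * \<gamma> j))" using GP by simp
    also have "\<dots> = Pm S * braid n \<gamma> i j"
      unfolding braid_eq using mult_smult_distrib[OF PS OG] mult_minus_distrib_mat[OF PS one_carrier_mat G] PS
      by simp
    finally show ?thesis using ij(1) by simp
  next
    assume "M \<in> (if even (card S) then \<gamma> ` ({1..2*n} - S) else \<gamma> ` S)"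
    then obtain j where j: "M = \<gamma> j" "j \<in> {1..2*n}" "(even (card S) \<and> j \<notin> S) \<or> (odd (card S) \<and> j \<in> S)"
      using S by (cases "even (card S)") auto
    have "even (card (S - {j}))"
      using j(3) fS by (elim disjE) (auto simp: card_Diff_singleton)
    then show ?thesis using Pm_sign[OF S j(2)] j(1) by simp
  qed
qed

lemma span_comm:
  fixes M Gs :: "complex mat"
  assumes M: "M \<in> carrier_mat d d" and Gs: "Gs \<in> carrier_mat d d" and c: "M * Gs = Gs * M"
  shows "(a \<cdot>\<^sub>m 1\<^sub>m d + b \<cdot>\<^sub>m Gs) * M = M * (a \<cdot>\<^sub>m 1\<^sub>m d + b \<cdot>\<^sub>m Gs)"
proof -
  have o: "1\<^sub>m d \<in> carrier_mat d d" by simp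
  have a1: "a \<cdot>\<^sub>m 1\<^sub>m d \<in> carrier_mat d d" and bG: "b \<cdot>\<^sub>m Gs \<in> carrier_mat d d"
    using Gs by auto
  have "(a \<cdot>\<^sub>m 1\<^sub>m d + b \<cdot>\<^sub>m Gs) * M = (a \<cdot>\<^sub>m 1\<^sub>m d) * M + (b \<cdot>\<^sub>m Gs) * M"
    by (rule add_mult_distrib_mat[OF a1 bG M])
  also have "\<dots> = a \<cdot>\<^sub>m (1\<^sub>m d * M) + b \<cdot>\<^sub>m (Gs * M)"
    by (simp only: mult_smult_assoc_mat[OF o M] mult_smult_assoc_mat[OF Gs M])
  also have "\<dots> = a \<cdot>\<^sub>m (M * 1\<^sub>m d) + b \<cdot>\<^sub>m (M * Gs)"
    by (simp only: left_mult_one_mat[OF M] right_mult_one_mat[OF M] c)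
  also have "\<dots> = M * (a \<cdot>\<^sub>m 1\<^sub>m d) + M * (b \<cdot>\<^sub>m Gs)"
    by (simp only: mult_smult_distrib[OF M o] mult_smult_distrib[OF M Gs])
  also have "\<dots> = M * (a \<cdot>\<^sub>m 1\<^sub>m d + b \<cdot>\<^sub>m Gs)"
    by (rule mult_add_distrib_mat[OF M a1 bG, symmetric])
  finally show ?thesis .
qed

end
theorem mainTheorem14:
  fixes n :: nat and \<gamma> :: "nat \<Rightarrow> complex mat" and S :: "nat set"
  assumes "majorana_family n \<gamma>"
    and "S \<subseteq> {1..2*n}" and "1 \<le> card S" and "card S \<le> 2*n - 1"
  shows "(\<forall>M \<in> P_set n \<gamma> S \<union> O_set n \<gamma> S. M * gammaS n \<gamma> S = gammaS n \<gamma> S * M)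
       \<and> commutant n (P_set n \<gamma> S \<union> O_set n \<gamma> S) = span2 n (gammaS n \<gamma> S)
       \<and> commutant n (stabilizer n \<gamma> S) = span2 n (gammaS n \<gamma> S)"
proof -
  interpret m: maj n \<gamma> using assms(1) by (simp add: maj_def)
  note S = assms(2)
  define z :: complex where "z = \<i> ^ (card S choose 2)"
  have z0: "z \<noteq> 0" unfolding z_def by simp
  define Gs where "Gs = gammaS n \<gamma> S"
  have Gs_eq: "Gs = z \<cdot>\<^sub>m m.Pm S" unfolding Gs_def z_def by (rule m.gammaS_eq)
  have PS: "m.Pm S \<in> carrier_mat m.d m.d" using m.Pm_car[OF S] .
  have GsC: "Gs \<in> carrier_mat m.d m.d" unfolding Gs_eq using PS by simp
  have S0: "S \<noteq> {}" using assms(3) by auto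
  define PO where "PO = P_set n \<gamma> S \<union> O_set n \<gamma> S"
  have P1: "M * Gs = Gs * M" if M: "M \<in> PO" for M
  proof -
    have MC: "M \<in> carrier_mat m.d m.d" using m.PO_car[OF S] M unfolding PO_def by blast
    have "M * Gs = z \<cdot>\<^sub>m (M * m.Pm S)" unfolding Gs_eq using mult_smult_distrib[OF MC PS] .
    also have "\<dots> = z \<cdot>\<^sub>m (m.Pm S * M)" using m.part1[OF S] M unfolding PO_def by simp
    also have "\<dots> = Gs * M" unfolding Gs_eq using mult_smult_assoc_mat[OF PS MC] by simp
    finally show ?thesis .
  qed
  have span_sub: "span2 n Gs \<subseteq> commutant n X" if XX: "\<And>U. U \<in> X \<Longrightarrow> U \<in> carrier_mat m.d m.d \<and> U * Gs = Gs * U" for X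
  proof
    fix A assume "A \<in> span2 n Gs"
    then obtain a b where A: "A = a \<cdot>\<^sub>m 1\<^sub>m m.d + b \<cdot>\<^sub>m Gs" unfolding span2_def by blast
    have AC: "A \<in> carrier_mat m.d m.d" unfolding A using GsC by simp
    have "A * U = U * A" if "U \<in> X" for U
    proof -
      have UC: "U \<in> carrier_mat m.d m.d" and cU: "U * Gs = Gs * U" using XX[OF that] by auto
      show ?thesis unfolding A by (rule m.span_comm[OF UC GsC cU])
    qed
    then show "A \<in> commutant n X" unfolding commutant_def using AC by blast
  qed
  have C2: "commutant n PO = span2 n Gs"
  proof
    show "commutant n PO \<subseteq> span2 n Gs"
    proof
      fix A assume "A \<in> commutant n PO"
      then have AC: "A \<in> carrier_mat m.d m.d" and comm: "\<forall>M\<in>PO. A * M = M * A"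
        unfolding commutant_def by auto
      have van: "tr (m.Qm T * A) = 0" if "T \<subseteq> {1..2*n}" "T \<noteq> {}" "T \<noteq> S" for T
        using m.trace_vanish[OF S assms(3) assms(4) AC _ that] comm unfolding PO_def by blast
      obtain a b where ab: "A = a \<cdot>\<^sub>m 1\<^sub>m m.d + b \<cdot>\<^sub>m m.Pm S"
        using m.in_span[OF AC S S0 van] by blast
      have "b \<cdot>\<^sub>m m.Pm S = (b / z) \<cdot>\<^sub>m Gs" unfolding Gs_eq smult_smult_mat' using z0 by simp
      then show "A \<in> span2 n Gs" unfolding span2_def using ab by auto
    qed
    show "span2 n Gs \<subseteq> commutant n PO"
      by (rule span_sub) (use P1 m.PO_car[OF S] in \<open>auto simp: PO_def\<close>)
  qed
  have PO_stab: "PO \<subseteq> stabilizer n \<gamma> S"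
  proof
    fix M assume M: "M \<in> PO"
    have MC: "M \<in> carrier_mat m.d m.d" using m.PO_car[OF S] M unfolding PO_def by blast
    have Mg: "M \<in> generators n \<gamma>" using m.PO_gen[OF S] M unfolding PO_def by blast
    have "M * 1\<^sub>m m.d \<in> gen_group n \<gamma>" by (rule gen_group.gen_mult[OF Mg gen_group.gen_one])
    then have MG: "M \<in> gen_group n \<gamma>" using MC by simp
    have MA: "mat_adjoint M * M = 1\<^sub>m m.d" using m.gen_unit[OF Mg] by blast
    have MA2: "M * mat_adjoint M = 1\<^sub>m m.d"
      using mat_mult_left_right_inverse[OF adj_car[OF MC] MC MA] .
    have "M * Gs * mat_adjoint M = Gs * (M * mat_adjoint M)"
      using P1[OF M] assoc_mult_mat[OF GsC MC adj_car[OF MC]] by simp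
    also have "\<dots> = Gs" using MA2 GsC by simp
    finally show "M \<in> stabilizer n \<gamma> S" unfolding stabilizer_def Gs_def using MG by simp
  qed
  have C3: "commutant n (stabilizer n \<gamma> S) = span2 n Gs"
  proof
    show "commutant n (stabilizer n \<gamma> S) \<subseteq> span2 n Gs"
      using PO_stab C2 unfolding commutant_def by blast
    show "span2 n Gs \<subseteq> commutant n (stabilizer n \<gamma> S)"
    proof (rule span_sub)
      fix U assume U: "U \<in> stabilizer n \<gamma> S"
      then have UG: "U \<in> gen_group n \<gamma>" and fix': "U * Gs * mat_adjoint U = Gs"
        unfolding stabilizer_def Gs_def by auto
      have UC: "U \<in> carrier_mat m.d m.d" and UU: "mat_adjoint U * U = 1\<^sub>m m.d"
        using m.group_unit[OF UG] by auto
      have UA: "mat_adjoint U \<in> carrier_mat m.d m.d" using adj_car[OF UC] .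
      have "U * Gs = U * Gs * (mat_adjoint U * U)" using UU UC GsC by simp
      also have "\<dots> = (U * Gs * mat_adjoint U) * U"
        using assoc_mult_mat[OF mult_carrier_mat[OF UC GsC] UA UC] by simp
      also have "\<dots> = Gs * U" using fix' by simp
      finally show "U \<in> carrier_mat m.d m.d \<and> U * Gs = Gs * U" using UC by simp
    qed
  qed
  show ?thesis using P1 C2 C3 unfolding PO_def Gs_def by blast
qed

end
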